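(* Fix integers $n\ge 1$ and $N\ge 1$, tumor parameters $\alpha_0,\beta_0>0$, a constant $\tau(N)\in\mathbb{R}$, and for each $m\in\{1,\dots,n\}$ numbers $D_m>0$, integers $N_m\ge 1$, and $0<\rho_m^{\min}\le\rho_m^{\max}<\infty$. Index the organs so that $D_1^2/N_1\le D_2^2/N_2\le\cdots\le D_n^2/N_n$. Consider the robust problem $$\text{(RFRAC(N))}\quad f^*(N)=\max_{\vec d\in\mathbb{R}^N}\ \alpha_0\sum_{t=1}^N d_t+\beta_0\sum_{t=1}^N d_t^2-\tau(N)$$ subject to $\vec d\ge 0$ and, for every $m\in\{1,\dots,n\}$ and every $\tilde\rho_m\in[\rho_m^{\min},\rho_m^{\max}]$, $$\sum_{t=1}^N d_t+\tilde\rho_m\Big(\sum_{t=1}^N d_t^2-\frac{D_m^2}{N_m}\Big)\le D_m .$$ For $k\in\{0,1,\dots,n\}$, with $\mathrm{RC}^+_m=D_m+\rho_m^{\max}D_m^2/N_m$ and $\mathrm{RC}^-_m=D_m+\rho_m^{\min}D_m^2/N_m$, define the subproblem $$\text{(kSub(N))}\quad f^*(N;k)=\max_{\vec d\in\mathbb{R}^N}\ \alpha_0\sum_{t=1}^N d_t+\beta_0\sum_{t=1}^N d_t^2-\tau(N)$$ subject to $\vec d\ge 0$; $\sum_t d_t+\rho_m^{\max}\sum_t d_t^2\le \mathrm{RC}^+_m$ for $m=1,\dots,k$; $\sum_t d_t+\rho_m^{\min}\sum_t d_t^2\le \mathrm{RC}^-_m$ for $m=k+1,\dots,n$; $\sum_t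 d_t^2\ge D_k^2/N_k$ if $k\ne 0$; and $\sum_t d_t^2\le D_{k+1}^2/N_{k+1}$ if $k\ne n$. Then (RFRAC(N)) can be solved by solving the $n+1$ subproblems (kSub(N)), $k=0,\dots,n$, and picking a solution with the largest objective value: that is, $f^*(N)=\max\{f^*(N;k): k\in\{0,\dots,n\},\ \text{(kSub(N)) feasible}\}$, and an optimal solution of a subproblem attaining this maximum is optimal for (RFRAC(N)).
   Context: This is the robust counterpart (for a fixed number $N$ of treatment fractions) of the linear-quadratic fractionation problem in radiotherapy: $\vec d=(d_1,\dots,d_N)$ are the doses per fraction, the objective is the tumor biological effect with proliferation correction $\tau(N)$ (a constant once $N$ is fixed), and for each organ-at-risk $m$ the unknown parameter $\tilde\rho_m=\beta_m/\alpha_m$ lies in the known interval $[\rho_m^{\min},\rho_m^{\max}]$; $D_m$ is a tolerance dose delivered conventionally in $N_m$ equal fractions. Terms whose index condition is vacuous (e.g. the constraints for $m=1,\dots,k$ when $k=0$) are omitted. *)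

theory Defs
  imports "HOL-Analysis.Analysis"
begin

text \<open>Dose vectors are functions d :: nat => real, of which only the entries
  d 1, ..., d N (the N fractions) matter.\<close>

definition tumor_obj :: "nat \<Rightarrow> real \<Rightarrow> real \<Rightarrow> real \<Rightarrow> (nat \<Rightarrow> real) \<Rightarrow> real" where
  "tumor_obj N a0 b0 tauN d = a0 * (\<Sum>t=1..N. d t) + b0 * (\<Sum>t=1..N. (d t)^2) - tauN"

definition rfrac_feas ::
  "nat \<Rightarrow> nat \<Rightarrow> (nat \<Rightarrow> real) \<Rightarrow> (nat \<Rightarrow> nat) \<Rightarrow> (nat \<Rightarrow> real) \<Rightarrow> (nat \<Rightarrow> real)
     \<Rightarrow> (nat \<Rightarrow> real) set" where
  "rfrac_feas N n D Nm rmin rmax =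
     {d. (\<forall>t\<in>{1..N}. 0 \<le> d t) \<and>
         (\<forall>m\<in>{1..n}. \<forall>r\<in>{rmin m..rmax m}.
            (\<Sum>t=1..N. d t) + r * ((\<Sum>t=1..N. (d t)^2) - (D m)^2 / real (Nm m)) \<le> D m)}"

definition ksub_feas ::
  "nat \<Rightarrow> nat \<Rightarrow> (nat \<Rightarrow> real) \<Rightarrow> (nat \<Rightarrow> nat) \<Rightarrow> (nat \<Rightarrow> real) \<Rightarrow> (nat \<Rightarrow> real)
     \<Rightarrow> nat \<Rightarrow> (nat \<Rightarrow> real) set" where
  "ksub_feas N n D Nm rmin rmax k =
     {d. (\<forall>t\<in>{1..N}. 0 \<le> d t) \<and>
         (\<forall>m\<in>{1..k}. (\<Sum>t=1..N. d t) + rmax m * (\<Sum>t=1..N. (d t)^2)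
                        \<le> D m + rmax m * (D m)^2 / real (Nm m)) \<and>
         (\<forall>m\<in>{k+1..n}. (\<Sum>t=1..N. d t) + rmin m * (\<Sum>t=1..N. (d t)^2)
                        \<le> D m + rmin m * (D m)^2 / real (Nm m)) \<and>
         (k \<noteq> 0 \<longrightarrow> (\<Sum>t=1..N. (d t)^2) \<ge> (D k)^2 / real (Nm k)) \<and>
         (k \<noteq> n \<longrightarrow> (\<Sum>t=1..N. (d t)^2) \<le> (D (k+1))^2 / real (Nm (k+1)))}"

definition is_max_value :: "('a \<Rightarrow> real) \<Rightarrow> 'a set \<Rightarrow> real \<Rightarrow> bool" where
  "is_max_value f S v \<longleftrightarrow> (\<exists>x\<in>S. f x = v) \<and> (\<forall>x\<in>S. f x \<le> v)"

definition is_optimal :: "('a \<Rightarrow> real) \<Rightarrow> 'a set \<Rightarrow> 'a \<Rightarrow> bool" where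
  "is_optimal f S x \<longleftrightarrow> x \<in> S \<and> (\<forall>y\<in>S. f y \<le> f x)"

end

theory Submission
  imports Defs
begin

lemma coord_cont[continuous_intros]: "continuous_on S (\<lambda>x::nat\<Rightarrow>real. x i)"
  by (rule continuous_on_subset[OF continuous_on_product_coordinates]) simp

lemma closed_imp_const: "closed {x. Q x} \<Longrightarrow> closed {x. P \<longrightarrow> Q x}"
  by (cases P) auto

lemma closed_ball_gen: "(\<And>t. t \<in> A \<Longrightarrow> closed {x. P t x}) \<Longrightarrow> closed {x. \<forall>t\<in>A. P t x}"
proof -
  assume h: "\<And>t. t \<in> A \<Longrightarrow> closed {x. P t x}"
  have "{x. \<forall>t\<in>A. P t x} = (\<Inter>t\<in>A. {x. P t x})" by auto
  thus ?thesis using h by (simp add: closed_INT)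
qed

lemma ksub_closed: "closed (ksub_feas N n D Nm rmin rmax k)"
  unfolding ksub_feas_def
  apply (intro closed_Collect_conj closed_ball_gen closed_imp_const)
  apply (intro closed_Collect_le continuous_intros; simp)+
  done

lemma Qmono:
  fixes Q :: "nat \<Rightarrow> real"
  assumes "\<forall>m. 1 \<le> m \<and> m < n \<longrightarrow> Q m \<le> Q (m+1)" "1 \<le> i" "i \<le> j" "j \<le> n"
  shows "Q i \<le> Q j"
  using assms(3,4)
proof (induction j rule: dec_induct)
  case base then show ?case by simp
next
  case (step j)
  then have "Q j \<le> Q (j+1)" using assms(1,2) by auto
  with step show ?case by simp
qed

lemma sub1:
  assumes kn: "k \<le> n"
    and h5: "\<forall>m\<in>{1..n}. D m > 0 \<and> Nm m \<ge> 1 \<and> 0 < rmin m \<and> rmin m \<le> rmax m"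
    and h6: "\<forall>m. 1 \<le> m \<and> m < n \<longrightarrow> (D m)^2 / real (Nm m) \<le> (D (m+1))^2 / real (Nm (m+1))"
    and d: "d \<in> ksub_feas N n D Nm rmin rmax k"
  shows "d \<in> rfrac_feas N n D Nm rmin rmax"
proof -
  define Q where "Q m = (D m)^2 / real (Nm m)" for m
  define s1 where "s1 = (\<Sum>t=1..N. d t)"
  define s2 where "s2 = (\<Sum>t=1..N. (d t)^2)"
  have h6': "\<forall>m. 1 \<le> m \<and> m < n \<longrightarrow> Q m \<le> Q (m+1)" using h6 by (simp add: Q_def)
  have nn: "\<forall>t\<in>{1..N}. 0 \<le> d t" using d by (simp add: ksub_feas_def)
  have lo: "\<And>m. m \<in> {1..k} \<Longrightarrow> s1 + rmax m * s2 \<le> D m + rmax m * Q m"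
    using d by (simp add: ksub_feas_def s1_def s2_def Q_def)
  have hi: "\<And>m. m \<in> {k+1..n} \<Longrightarrow> s1 + rmin m * s2 \<le> D m + rmin m * Q m"
    using d by (simp add: ksub_feas_def s1_def s2_def Q_def)
  have b1: "k \<noteq> 0 \<Longrightarrow> Q k \<le> s2" using d by (simp add: ksub_feas_def s2_def Q_def)
  have b2: "k \<noteq> n \<Longrightarrow> s2 \<le> Q (k+1)" using d by (simp add: ksub_feas_def s2_def Q_def)
  have "s1 + r * (s2 - Q m) \<le> D m" if m: "m \<in> {1..n}" and r: "r \<in> {rmin m..rmax m}" for m r
  proof (cases "m \<le> k")
    case True
    have "Q m \<le> Q k" using Qmono[OF h6', of m k] m True kn by auto
    with b1 True m have "0 \<le> s2 - Q m" by auto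
    hence "r * (s2 - Q m) \<le> rmax m * (s2 - Q m)" using r by (simp add: mult_right_mono)
    moreover have "s1 + rmax m * s2 \<le> D m + rmax m * Q m" using lo True m by auto
    ultimately show ?thesis by (simp add: algebra_simps)
  next
    case False
    have "Q (k+1) \<le> Q m" using Qmono[OF h6', of "k+1" m] m False by auto
    with b2 False m have "s2 - Q m \<le> 0" by auto
    hence "r * (s2 - Q m) \<le> rmin m * (s2 - Q m)" using r by (simp add: mult_right_mono_neg)
    moreover have "s1 + rmin m * s2 \<le> D m + rmin m * Q m" using hi False m by auto
    ultimately show ?thesis by (simp add: algebra_simps)
  qed
  thus ?thesis using nn by (simp add: rfrac_feas_def s1_def s2_def Q_def)
qed

lemma sub2:
  assumes h5: "\<forall>m\<in>{1..n}. D m > 0 \<and> Nm m \<ge> 1 \<and> 0 < rmin m \<and> rmin m \<le> rmax m"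
    and d: "d \<in> rfrac_feas N n D Nm rmin rmax"
  shows "\<exists>k\<le>n. d \<in> ksub_feas N n D Nm rmin rmax k"
proof -
  define Q where "Q m = (D m)^2 / real (Nm m)" for m
  define s1 where "s1 = (\<Sum>t=1..N. d t)"
  define s2 where "s2 = (\<Sum>t=1..N. (d t)^2)"
  have nn: "\<forall>t\<in>{1..N}. 0 \<le> d t" using d by (simp add: rfrac_feas_def)
  have rob: "\<And>m r. m \<in> {1..n} \<Longrightarrow> r \<in> {rmin m..rmax m} \<Longrightarrow> s1 + r * (s2 - Q m) \<le> D m"
    using d by (simp add: rfrac_feas_def s1_def s2_def Q_def)
  have lo: "\<And>m. m \<in> {1..n} \<Longrightarrow> s1 + rmax m * s2 \<le> D m + rmax m * Q m"
  proof -
    fix m assume m: "m \<in> {1..n}"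
    have "s1 + rmax m * (s2 - Q m) \<le> D m" using rob[OF m] h5 m by auto
    thus "s1 + rmax m * s2 \<le> D m + rmax m * Q m" by (simp add: algebra_simps)
  qed
  have hi: "\<And>m. m \<in> {1..n} \<Longrightarrow> s1 + rmin m * s2 \<le> D m + rmin m * Q m"
  proof -
    fix m assume m: "m \<in> {1..n}"
    have "s1 + rmin m * (s2 - Q m) \<le> D m" using rob[OF m] h5 m by auto
    thus "s1 + rmin m * s2 \<le> D m + rmin m * Q m" by (simp add: algebra_simps)
  qed
  define A where "A = {m. m \<le> n \<and> (m = 0 \<or> Q m \<le> s2)}"
  define k where "k = Max A"
  have finA: "finite A" unfolding A_def by auto
  have "0 \<in> A" unfolding A_def by auto
  hence kA: "k \<in> A" using finA unfolding k_def by (intro Max_in) auto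
  have kn: "k \<le> n" using kA A_def by auto
  have b1: "k \<noteq> 0 \<Longrightarrow> Q k \<le> s2" using kA A_def by auto
  have b2: "s2 \<le> Q (k+1)" if "k \<noteq> n"
  proof (rule ccontr)
    assume "\<not> s2 \<le> Q (k+1)"
    hence "k+1 \<in> A" using that kn A_def by auto
    hence "k+1 \<le> k" using finA unfolding k_def by (simp add: Max_ge)
    thus False by simp
  qed
  have "d \<in> ksub_feas N n D Nm rmin rmax k"
    using nn lo hi b1 b2 kn by (auto simp add: ksub_feas_def s1_def s2_def Q_def)
  thus ?thesis using kn by auto
qed

lemma attain:
  assumes n1: "n \<ge> 1"
    and h5: "\<forall>m\<in>{1..n}. D m > 0 \<and> Nm m \<ge> 1 \<and> 0 < rmin m \<and> rmin m \<le> rmax m"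
    and ne: "ksub_feas N n D Nm rmin rmax k \<noteq> {}"
  shows "\<exists>x\<in>ksub_feas N n D Nm rmin rmax k. \<forall>y\<in>ksub_feas N n D Nm rmin rmax k.
           tumor_obj N a0 b0 tauN y \<le> tumor_obj N a0 b0 tauN x"
proof -
  define F where "F = ksub_feas N n D Nm rmin rmax k"
  define f where "f = tumor_obj N a0 b0 tauN"
  define B where "B = D 1 + rmax 1 * (D 1)^2 / real (Nm 1)"
  define P where "P d = (\<lambda>t. if t \<in> {1..N} then d t else (0::real))" for d :: "nat \<Rightarrow> real"
  have h1: "0 < rmin 1" "rmin 1 \<le> rmax 1" using h5 n1 by auto
  have Q1: "0 \<le> (D 1)^2 / real (Nm 1)" by simp
  have bound: "d t \<le> B" if d: "d \<in> F" and t: "t \<in> {1..N}" for d t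
  proof -
    have nn: "\<forall>t\<in>{1..N}. 0 \<le> d t" using d by (simp add: F_def ksub_feas_def)
    have s2: "0 \<le> (\<Sum>t=1..N. (d t)^2)" by (simp add: sum_nonneg)
    have "d t \<le> (\<Sum>t=1..N. d t)" using nn t by (intro member_le_sum) auto
    moreover have "(\<Sum>t=1..N. d t) \<le> B"
    proof (cases "1 \<le> k")
      case True
      hence "(\<Sum>t=1..N. d t) + rmax 1 * (\<Sum>t=1..N. (d t)^2) \<le> D 1 + rmax 1 * (D 1)^2 / real (Nm 1)"
        using d by (simp add: F_def ksub_feas_def)
      moreover have "0 \<le> rmax 1 * (\<Sum>t=1..N. (d t)^2)" using h1 s2 by simp
      ultimately show ?thesis unfolding B_def by linarith
    next
      case False
      hence "(\<Sum>t=1..N. d t) + rmin 1 * (\<Sum>t=1..N. (d t)^2) \<le> D 1 + rmin 1 * (D 1)^2 / real (Nm 1)"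
        using d n1 by (simp add: F_def ksub_feas_def)
      moreover have "0 \<le> rmin 1 * (\<Sum>t=1..N. (d t)^2)" using h1 s2 by simp
      moreover have "rmin 1 * (D 1)^2 / real (Nm 1) \<le> rmax 1 * (D 1)^2 / real (Nm 1)"
        using h1 Q1 by (simp add: divide_right_mono mult_right_mono)
      ultimately show ?thesis unfolding B_def by linarith
    qed
    ultimately show ?thesis by linarith
  qed
  have sP1: "(\<Sum>t=1..N. P d t) = (\<Sum>t=1..N. d t)" for d by (rule sum.cong) (auto simp: P_def)
  have sP2: "(\<Sum>t=1..N. (P d t)^2) = (\<Sum>t=1..N. (d t)^2)" for d by (rule sum.cong) (auto simp: P_def)
  have PF: "P d \<in> F" if "d \<in> F" for d
    using that unfolding F_def ksub_feas_def by (simp add: sP1 sP2) (simp add: P_def)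
  have fP: "f (P d) = f d" for d unfolding f_def tumor_obj_def using sP1[of d] sP2[of d] by simp
  define K where "K = PiE UNIV (\<lambda>t. if t \<in> {1..N} then {0..B} else {0::real})"
  have cK: "compact K"
  proof -
    have "compactin (product_topology (\<lambda>i. euclidean) UNIV) K"
      unfolding K_def compactin_PiE by auto
    thus ?thesis by (simp add: euclidean_product_topology)
  qed
  define S where "S = K \<inter> F"
  have cS: "compact S" unfolding S_def F_def using cK ksub_closed by (rule compact_Int_closed)
  have PS: "P d \<in> S" if "d \<in> F" for d
  proof -
    have "P d \<in> K"
    proof -
      have "\<forall>t\<in>{1..N}. 0 \<le> d t" using that by (simp add: F_def ksub_feas_def)
      thus ?thesis using bound[OF that] unfolding K_def P_def by auto
    qed
    thus ?thesis using PF[OF that] S_def by auto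
  qed
  obtain d0 where "d0 \<in> F" using ne F_def by auto
  hence Sne: "S \<noteq> {}" using PS by auto
  have cf: "continuous_on S f" unfolding f_def tumor_obj_def by (intro continuous_intros)
  obtain x where xS: "x \<in> S" and xm: "\<forall>y\<in>S. f y \<le> f x"
    using continuous_attains_sup[OF cS Sne cf] by auto
  have "x \<in> F" using xS S_def by auto
  moreover have "\<forall>y\<in>F. f y \<le> f x" using xm PS fP by metis
  ultimately show ?thesis unfolding F_def f_def by blast
qed

theorem mainTheorem1:
  fixes n N :: nat and a0 b0 tauN :: real
    and D rmin rmax :: "nat \<Rightarrow> real" and Nm :: "nat \<Rightarrow> nat"
  assumes "n \<ge> 1" and "N \<ge> 1" and "a0 > 0" and "b0 > 0"
    and "\<forall>m\<in>{1..n}. D m > 0 \<and> Nm m \<ge> 1 \<and> 0 < rmin m \<and> rmin m \<le> rmax m"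
    and "\<forall>m. 1 \<le> m \<and> m < n \<longrightarrow> (D m)^2 / real (Nm m) \<le> (D (m+1))^2 / real (Nm (m+1))"
  shows "{k. k \<le> n \<and> ksub_feas N n D Nm rmin rmax k \<noteq> {}} \<noteq> {}
    \<and> (\<forall>k\<le>n. ksub_feas N n D Nm rmin rmax k \<noteq> {} \<longrightarrow>
          is_max_value (tumor_obj N a0 b0 tauN) (ksub_feas N n D Nm rmin rmax k)
            (Sup (tumor_obj N a0 b0 tauN ` ksub_feas N n D Nm rmin rmax k)))
    \<and> is_max_value (tumor_obj N a0 b0 tauN) (rfrac_feas N n D Nm rmin rmax)
        (Max {Sup (tumor_obj N a0 b0 tauN ` ksub_feas N n D Nm rmin rmax k) | k.
               k \<le> n \<and> ksub_feas N n D Nm rmin rmax k \<noteq> {}})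
    \<and> (\<forall>k\<le>n. \<forall>d. is_optimal (tumor_obj N a0 b0 tauN) (ksub_feas N n D Nm rmin rmax k) d
          \<and> tumor_obj N a0 b0 tauN d = Max {Sup (tumor_obj N a0 b0 tauN ` ksub_feas N n D Nm rmin rmax j) | j.
               j \<le> n \<and> ksub_feas N n D Nm rmin rmax j \<noteq> {}}
          \<longrightarrow> is_optimal (tumor_obj N a0 b0 tauN) (rfrac_feas N n D Nm rmin rmax) d)"
proof -
  define F where "F k = ksub_feas N n D Nm rmin rmax k" for k
  define f where "f = tumor_obj N a0 b0 tauN"
  define R where "R = rfrac_feas N n D Nm rmin rmax"
  note h5 = assms(5) and h6 = assms(6)
  have f0: "F 0 \<noteq> {}"
  proof -
    have "(\<lambda>_. 0) \<in> F 0" unfolding F_def ksub_feas_def using h5 assms(1)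
      by (auto intro!: add_nonneg_nonneg mult_nonneg_nonneg simp: less_imp_le)
    thus ?thesis by auto
  qed
  have att: "\<exists>x\<in>F k. \<forall>y\<in>F k. f y \<le> f x" if "F k \<noteq> {}" for k
    using attain[OF assms(1) h5] that unfolding F_def f_def by blast
  have supeq: "Sup (f ` F k) = f x" if "x \<in> F k" "\<forall>y\<in>F k. f y \<le> f x" for k x
    using that by (intro cSup_eq_maximum) auto
  have P2: "is_max_value f (F k) (Sup (f ` F k))" if kne: "F k \<noteq> {}" for k
  proof -
    obtain x where "x \<in> F k" "\<forall>y\<in>F k. f y \<le> f x" using att[OF kne] by blast
    thus ?thesis using supeq unfolding is_max_value_def by metis
  qed
  have le_sup: "f y \<le> Sup (f ` F k)" if yF: "y \<in> F k" for y k
  proof -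
    have "F k \<noteq> {}" using yF by auto
    then obtain x where "x \<in> F k" "\<forall>y\<in>F k. f y \<le> f x" using att by blast
    thus ?thesis using supeq yF by metis
  qed
  define V where "V = {Sup (f ` F k) | k. k \<le> n \<and> F k \<noteq> {}}"
  have finV: "finite V"
  proof -
    have "V \<subseteq> (\<lambda>k. Sup (f ` F k)) ` {..n}" unfolding V_def by auto
    thus ?thesis by (rule finite_subset) auto
  qed
  have Vne: "V \<noteq> {}" unfolding V_def using f0 by auto
  have P3: "is_max_value f R (Max V)"
  proof -
    have "Max V \<in> V" using finV Vne by (rule Max_in)
    then obtain k0 where k0: "k0 \<le> n" "F k0 \<noteq> {}" "Max V = Sup (f ` F k0)" unfolding V_def by auto
    obtain x where x: "x \<in> F k0" "\<forall>y\<in>F k0. f y \<le> f x" using att[OF k0(2)] by blast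
    have xR: "x \<in> R" unfolding R_def using sub1[OF k0(1) h5 h6] x(1) F_def by auto
    have fx: "f x = Max V" using k0(3) supeq[OF x] by simp
    have "f y \<le> Max V" if yR: "y \<in> R" for y
    proof -
      obtain k where k: "k \<le> n" "y \<in> F k" using sub2[OF h5 yR[unfolded R_def]] unfolding R_def F_def by blast
      have "Sup (f ` F k) \<in> V" unfolding V_def using k by auto
      hence "Sup (f ` F k) \<le> Max V" using finV by (simp add: Max_ge)
      thus ?thesis using le_sup[OF k(2)] by linarith
    qed
    thus ?thesis unfolding is_max_value_def using xR fx by blast
  qed
  have P4: "is_optimal f R d" if "k \<le> n" "is_optimal f (F k) d" "f d = Max V" for k d
  proof -
    have "d \<in> R" using that(2) sub1[OF that(1) h5 h6] unfolding is_optimal_def F_def R_def by auto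
    thus ?thesis using P3 that(3) unfolding is_optimal_def is_max_value_def by auto
  qed
  have G: "{k. k \<le> n \<and> F k \<noteq> {}} \<noteq> {}
    \<and> (\<forall>k\<le>n. F k \<noteq> {} \<longrightarrow> is_max_value f (F k) (Sup (f ` F k)))
    \<and> is_max_value f R (Max V)
    \<and> (\<forall>k\<le>n. \<forall>d. is_optimal f (F k) d \<and> f d = Max V \<longrightarrow> is_optimal f R d)"
    using f0 P2 P3 P4 by blast
  then show ?thesis unfolding F_def f_def R_def V_def .
qed

end
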